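(* Let $m\in\mathbb{N}$, let $\mathbb{R}^m$ carry a norm $\|\cdot\|$, and let $\mathcal{Y}\subseteq\mathbb{R}^m$ be bounded. Construct $(\mathfrak{C}_r)_{r\in\mathbb{N}_0}$ as follows. Let $C_0$ be an $m$-simplex with $C_0\supseteq\mathcal{Y}$ and $\mathfrak{C}_0:=\{C_0\}$. For $r=1,2,\ldots$: find a longest edge $E_{\boldsymbol{v},\boldsymbol{w}}$ of $\mathfrak{C}_{r-1}$, where an edge $E_{\boldsymbol{v},\boldsymbol{w}}:=\{\lambda\boldsymbol{v}+(1-\lambda)\boldsymbol{w}:0\le\lambda\le1\}$ is the segment between two extreme points $\boldsymbol{v},\boldsymbol{w}$ of some member of $\mathfrak{C}_{r-1}$; then obtain $\mathfrak{C}_r$ from $\mathfrak{C}_{r-1}$ by replacing every simplex $C\in\mathfrak{C}_{r-1}$ that has $E_{\boldsymbol{v},\boldsymbol{w}}$ as a face by the two simplices $\operatorname{conv}\big((V(C)\setminus\{\boldsymbol{v}\})\cup\{\tfrac{\boldsymbol{v}+\boldsymbol{w}}{2}\}\big)$ and $\operatorname{conv}\big((V(C)\setminus\{\boldsymbol{w}\})\cup\{\tfrac{\boldsymbol{v}+\boldsymbol{w}}{2}\}\big)$. Then $\mathfrak{C}_r$ is a simplicial cover of $\mathcal{Y}$ for every $r\in\mathbb{N}_0$, and $\lim_{r\to\infty}\eta(\mathfrak{C}_r)=0$.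
   Context: A convex $C'\subseteq C$ is a face of a convex set $C$ if $\lambda x_1+(1-\lambda)x_2\in C'$ with $0<\lambda<1$, $x_1,x_2\in C$ implies $x_1,x_2\in C'$; extreme points are singleton faces; $V(C)$ is the set of extreme points of $C$. A polyhedral cover of $\mathcal{Y}$ is a finite collection $\mathfrak{C}$ of polyhedra, each with an extreme point, whose union contains $\mathcal{Y}$, such that any two members with non-empty intersection intersect in a face of both; it is bounded if all members are bounded. A simplicial cover of a bounded $\mathcal{Y}\subseteq\mathbb{R}^m$ is a bounded polyhedral cover of $\mathcal{Y}$ all of whose members are $m$-simplices (convex hulls of $m+1$ affinely independent points). The mesh size is $\eta(\mathfrak{C}):=\max_{C\in\mathfrak{C}}\max_{\boldsymbol{v},\boldsymbol{v}'\in V(C)}\|\boldsymbol{v}-\boldsymbol{v}'\|$. *)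

theory Defs
  imports "HOL-Analysis.Analysis"
begin

text \<open>An arbitrary norm on a real vector space (R^m carries some norm, not necessarily Euclidean).\<close>
definition is_norm :: "('a::real_vector \<Rightarrow> real) \<Rightarrow> bool" where
  "is_norm N \<longleftrightarrow> (\<forall>x. N x = 0 \<longleftrightarrow> x = 0) \<and> (\<forall>a x. N (a *\<^sub>R x) = \<bar>a\<bar> * N x)
      \<and> (\<forall>x y. N (x + y) \<le> N x + N y)"

definition extreme_points :: "'a::real_vector set \<Rightarrow> 'a set" where
  "extreme_points C = {x. x extreme_point_of C}"

definition polyhedral_cover :: "'a::euclidean_space set \<Rightarrow> 'a set set \<Rightarrow> bool" where
  "polyhedral_cover Y \<CC> \<longleftrightarrow> finite \<CC>
     \<and> (\<forall>C\<in>\<CC>. polyhedron C \<and> (\<exists>x. x extreme_point_of C))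
     \<and> Y \<subseteq> \<Union>\<CC>
     \<and> (\<forall>C\<in>\<CC>. \<forall>D\<in>\<CC>. C \<inter> D \<noteq> {} \<longrightarrow> (C \<inter> D) face_of C \<and> (C \<inter> D) face_of D)"

definition bounded_polyhedral_cover :: "'a::euclidean_space set \<Rightarrow> 'a set set \<Rightarrow> bool" where
  "bounded_polyhedral_cover Y \<CC> \<longleftrightarrow> polyhedral_cover Y \<CC> \<and> (\<forall>C\<in>\<CC>. bounded C)"

definition simplicial_cover :: "(real^'m) set \<Rightarrow> (real^'m) set set \<Rightarrow> bool" where
  "simplicial_cover Y \<CC> \<longleftrightarrow> bounded_polyhedral_cover Y \<CC>
     \<and> (\<forall>C\<in>\<CC>. int CARD('m) simplex C)"

definition mesh_size :: "('a::real_vector \<Rightarrow> real) \<Rightarrow> 'a set set \<Rightarrow> real" where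
  "mesh_size N \<CC> = Max {N (v - v') | C v v'. C \<in> \<CC> \<and> v \<in> extreme_points C \<and> v' \<in> extreme_points C}"

definition is_edge_of :: "'a::real_vector \<Rightarrow> 'a \<Rightarrow> 'a set set \<Rightarrow> bool" where
  "is_edge_of v w \<CC> \<longleftrightarrow> (\<exists>C\<in>\<CC>. v \<in> extreme_points C \<and> w \<in> extreme_points C)"

text \<open>Longest edge w.r.t. N (length of closed_segment v w is N (v - w)).\<close>
definition is_longest_edge :: "('a::real_vector \<Rightarrow> real) \<Rightarrow> 'a \<Rightarrow> 'a \<Rightarrow> 'a set set \<Rightarrow> bool" where
  "is_longest_edge N v w \<CC> \<longleftrightarrow> is_edge_of v w \<CC>
     \<and> (\<forall>v' w'. is_edge_of v' w' \<CC> \<longrightarrow> N (v' - w') \<le> N (v - w))"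

definition bisect :: "'a::real_vector \<Rightarrow> 'a \<Rightarrow> 'a set set \<Rightarrow> 'a set set" where
  "bisect v w \<CC> =
     {C \<in> \<CC>. \<not> closed_segment v w face_of C}
     \<union> (\<Union>C\<in>{C \<in> \<CC>. closed_segment v w face_of C}.
          {convex hull (insert ((1/2) *\<^sub>R (v + w)) (extreme_points C - {v})),
           convex hull (insert ((1/2) *\<^sub>R (v + w)) (extreme_points C - {w}))})"

end

theory Submission
  imports Defs
begin


definition bary :: "'a::real_vector set \<Rightarrow> 'a \<Rightarrow> ('a \<Rightarrow> real) \<Rightarrow> bool" where
  "bary S x a \<longleftrightarrow> (\<forall>s\<in>S. 0 \<le> a s) \<and> sum a S = 1 \<and> (\<Sum>s\<in>S. a s *\<^sub>R s) = x"

lemma hull_iff_bary: "finite S \<Longrightarrow> x \<in> convex hull S \<longleftrightarrow> (\<exists>a. bary S x a)"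
  by (auto simp: convex_hull_finite bary_def)

lemma bary_cong: "(\<And>s. s \<in> T \<Longrightarrow> a s = b s) \<Longrightarrow> bary T x a \<longleftrightarrow> bary T x b"
  unfolding bary_def by (auto cong: sum.cong)

lemma bary_uniq:
  fixes S :: "'a::euclidean_space set"
  assumes "\<not> affine_dependent S" "bary S x a" "bary S x b" "s \<in> S"
  shows "a s = b s"
proof (rule ccontr)
  assume ne: "a s \<noteq> b s"
  have fin: "finite S" using assms(1) aff_independent_finite by blast
  let ?U = "\<lambda>s. a s - b s"
  have "sum ?U S = 0" using assms(2,3) by (simp add: bary_def sum_subtractf)
  moreover have "(\<Sum>s\<in>S. ?U s *\<^sub>R s) = 0"
    using assms(2,3) by (simp add: bary_def scaleR_diff_left sum_subtractf)
  ultimately have "affine_dependent S"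
    using ne assms(4) fin by (subst affine_dependent_explicit_finite) (auto intro!: exI[of _ ?U])
  then show False using assms(1) by blast
qed

lemma bary_restrict:
  assumes "finite S" "T \<subseteq> S" "\<forall>s\<in>S-T. a s = 0"
  shows "bary S x a \<longleftrightarrow> bary T x a"
proof -
  have "sum a S = sum a T"
    using assms by (intro sum.mono_neutral_right) auto
  moreover have "(\<Sum>s\<in>S. a s *\<^sub>R s) = (\<Sum>s\<in>T. a s *\<^sub>R s)"
    using assms by (intro sum.mono_neutral_right) auto
  moreover have "(\<forall>s\<in>S. 0 \<le> a s) \<longleftrightarrow> (\<forall>s\<in>T. 0 \<le> a s)"
    using assms by force
  ultimately show ?thesis unfolding bary_def by simp
qed

lemma hull_sub_iff:
  assumes "finite S" "T \<subseteq> S"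
  shows "x \<in> convex hull T \<longleftrightarrow> (\<exists>a. bary S x a \<and> (\<forall>s\<in>S-T. a s = 0))"
proof
  have finT: "finite T" using assms finite_subset by blast
  assume "x \<in> convex hull T"
  then obtain a where a: "bary T x a" using hull_iff_bary[OF finT] by blast
  define a' where "a' = (\<lambda>s. if s \<in> T then a s else 0)"
  have "bary T x a'" using a bary_cong[of T a' a x] by (simp add: a'_def)
  then have "bary S x a'" using bary_restrict[OF assms, of a'] by (simp add: a'_def)
  then show "\<exists>a. bary S x a \<and> (\<forall>s\<in>S-T. a s = 0)" by (auto simp: a'_def)
next
  assume "\<exists>a. bary S x a \<and> (\<forall>s\<in>S-T. a s = 0)"
  then obtain a where "bary S x a" "\<forall>s\<in>S-T. a s = 0" by blast
  then have "bary T x a" using bary_restrict[OF assms] by blast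
  moreover have "finite T" using assms finite_subset by blast
  ultimately show "x \<in> convex hull T"
    using hull_iff_bary by blast
qed


lemma half_iff0:
  assumes R: "finite R" "v \<notin> R" "w \<notin> R" "m \<notin> R" "v \<noteq> w" "m \<noteq> w" "m \<noteq> v"
    and m: "m = (1/2) *\<^sub>R (v + w)"
  shows "x \<in> convex hull (insert m (insert w R)) \<longleftrightarrow>
         (\<exists>a. bary (insert v (insert w R)) x a \<and> a v \<le> a w)"
proof
  have fin1: "finite (insert m (insert w R))" "finite (insert v (insert w R))" using R by auto
  have s1: "\<And>f. sum f (insert v (insert w R)) = f v + (f w + sum f R)"
    using R by simp
  have s2: "\<And>f. sum f (insert m (insert w R)) = f m + (f w + sum f R)"
    using R by simp
  have s3: "\<And>f :: 'a \<Rightarrow> 'a. sum f (insert v (insert w R)) = f v + (f w + sum f R)"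
    using R by simp
  have s4: "\<And>f :: 'a \<Rightarrow> 'a. sum f (insert m (insert w R)) = f m + (f w + sum f R)"
    using R by simp
  {
  assume "x \<in> convex hull (insert m (insert w R))"
  then obtain \<mu> where mu: "bary (insert m (insert w R)) x \<mu>"
    unfolding hull_iff_bary[OF fin1(1)] by blast
  define a where "a = (\<lambda>s. if s = v then \<mu> m/2 else if s = w then \<mu> w + \<mu> m/2 else \<mu> s)"
  have aR: "sum a R = sum \<mu> R" "(\<Sum>s\<in>R. a s *\<^sub>R s) = (\<Sum>s\<in>R. \<mu> s *\<^sub>R s)"
    using R unfolding a_def by (auto intro!: sum.cong)
  have av: "a v = \<mu> m/2" "a w = \<mu> w + \<mu> m/2" "\<And>s. s \<in> R \<Longrightarrow> a s = \<mu> s"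
    using R unfolding a_def by auto
  have mu1: "\<mu> m \<ge> 0" "\<mu> w \<ge> 0" "\<forall>s\<in>R. \<mu> s \<ge> 0" "\<mu> m + (\<mu> w + sum \<mu> R) = 1"
     "\<mu> m *\<^sub>R m + (\<mu> w *\<^sub>R w + (\<Sum>s\<in>R. \<mu> s *\<^sub>R s)) = x"
    using mu unfolding bary_def s2 s4 by auto
  have e: "\<mu> m *\<^sub>R m = (\<mu> m/2) *\<^sub>R v + (\<mu> m/2) *\<^sub>R w"
    by (simp add: m scaleR_add_right)
  have "bary (insert v (insert w R)) x a"
    unfolding bary_def s1 s3 aR 
  proof (intro conjI)
    show "\<forall>s\<in>insert v (insert w R). 0 \<le> a s" using mu1 av by auto
    show "a v + (a w + sum \<mu> R) = 1" using mu1 av by simp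
    show "a v *\<^sub>R v + (a w *\<^sub>R w + (\<Sum>s\<in>R. \<mu> s *\<^sub>R s)) = x"
      unfolding av(1,2) mu1(5)[symmetric] e by (simp add: scaleR_add_left)
  qed
  moreover have "a v \<le> a w" using mu1 av by auto
  ultimately show "\<exists>a. bary (insert v (insert w R)) x a \<and> a v \<le> a w" by blast
  }
  {
  assume "\<exists>a. bary (insert v (insert w R)) x a \<and> a v \<le> a w"
  then obtain a where a: "bary (insert v (insert w R)) x a" "a v \<le> a w" by blast
  define \<mu> where "\<mu> = (\<lambda>s. if s = m then 2 * a v else if s = w then a w - a v else a s)"
  have aR: "sum \<mu> R = sum a R" "(\<Sum>s\<in>R. \<mu> s *\<^sub>R s) = (\<Sum>s\<in>R. a s *\<^sub>R s)"
    using R unfolding \<mu>_def by (auto intro!: sum.cong)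
  have mv: "\<mu> m = 2 * a v" "\<mu> w = a w - a v" "\<And>s. s \<in> R \<Longrightarrow> \<mu> s = a s"
    using R unfolding \<mu>_def by auto
  have a1: "a v \<ge> 0" "a w \<ge> 0" "\<forall>s\<in>R. a s \<ge> 0" "a v + (a w + sum a R) = 1"
     "a v *\<^sub>R v + (a w *\<^sub>R w + (\<Sum>s\<in>R. a s *\<^sub>R s)) = x"
    using a unfolding bary_def s1 s3 by auto
  have e: "(2 * a v) *\<^sub>R m = a v *\<^sub>R v + a v *\<^sub>R w"
    by (simp add: m scaleR_add_right)
  have "bary (insert m (insert w R)) x \<mu>"
    unfolding bary_def s2 s4 aR
  proof (intro conjI)
    show "\<forall>s\<in>insert m (insert w R). 0 \<le> \<mu> s" using a1 mv a(2) by auto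
    show "\<mu> m + (\<mu> w + sum a R) = 1" using a1 mv by simp
    show "\<mu> m *\<^sub>R m + (\<mu> w *\<^sub>R w + (\<Sum>s\<in>R. a s *\<^sub>R s)) = x"
      unfolding mv(1,2) a1(5)[symmetric] e by (simp add: scaleR_diff_left)
  qed
  then show "x \<in> convex hull (insert m (insert w R))"
    unfolding hull_iff_bary[OF fin1(1)] by blast
  }
qed


lemma half_iff:
  assumes "finite S" "v \<in> S" "w \<in> S" "v \<noteq> w" "m \<notin> S" "m = (1/2) *\<^sub>R (v + w)"
  shows "x \<in> convex hull (insert m (S - {v})) \<longleftrightarrow> (\<exists>a. bary S x a \<and> a v \<le> a w)"
proof -
  have e1: "insert m (S - {v}) = insert m (insert w (S - {v,w}))" using assms by auto
  have e2: "S = insert v (insert w (S - {v,w}))" using assms by auto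
  show ?thesis
    apply (subst e1, subst (2) e2)
    apply (rule half_iff0)
    using assms by auto
qed

lemma eq_hull0:
  assumes R: "finite R" "v \<notin> R" "w \<notin> R" "m \<notin> R" "v \<noteq> w" "m \<noteq> w" "m \<noteq> v"
    and m: "m = (1/2) *\<^sub>R (v + w)"
    and a: "bary (insert v (insert w R)) x a" "a v = a w"
  shows "x \<in> convex hull (insert m R)"
proof -
  have fin1: "finite (insert m R)" using R by auto
  define \<mu> where "\<mu> = (\<lambda>s. if s = m then 2 * a v else a s)"
  have aR: "sum \<mu> R = sum a R" "(\<Sum>s\<in>R. \<mu> s *\<^sub>R s) = (\<Sum>s\<in>R. a s *\<^sub>R s)"
    using R unfolding \<mu>_def by (auto intro!: sum.cong)
  have mv: "\<mu> m = 2 * a v" "\<And>s. s \<in> R \<Longrightarrow> \<mu> s = a s"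
    using R unfolding \<mu>_def by auto
  have a1: "a v \<ge> 0" "a w \<ge> 0" "\<forall>s\<in>R. a s \<ge> 0" "a v + (a w + sum a R) = 1"
     "a v *\<^sub>R v + (a w *\<^sub>R w + (\<Sum>s\<in>R. a s *\<^sub>R s)) = x"
    using a R unfolding bary_def by auto
  have e: "(2 * a v) *\<^sub>R m = a v *\<^sub>R v + a v *\<^sub>R w"
    by (simp add: m scaleR_add_right)
  have "bary (insert m R) x \<mu>"
    unfolding bary_def using R
  proof (simp add: aR, intro conjI)
    show "0 \<le> \<mu> m" "\<forall>s\<in>R. 0 \<le> \<mu> s" using a1 mv by auto
    show "\<mu> m + sum a R = 1" using a1 mv a(2) by simp
    have e': "\<mu> m *\<^sub>R m = a v *\<^sub>R v + a w *\<^sub>R w" using e mv(1) a(2) by simp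
    show "\<mu> m *\<^sub>R m + (\<Sum>s\<in>R. a s *\<^sub>R s) = x"
      unfolding e' a1(5)[symmetric] by (simp add: add.assoc)
  qed
  then show ?thesis
    unfolding hull_iff_bary[OF fin1] by blast
qed

lemma eq_hull:
  assumes "finite S" "v \<in> S" "w \<in> S" "v \<noteq> w" "m \<notin> S" "m = (1/2) *\<^sub>R (v + w)"
    and "bary S x a" "a v = a w"
  shows "x \<in> convex hull (insert m (S - {v,w}))"
proof -
  have e2: "insert v (insert w (S - {v,w})) = S" using assms by auto
  show ?thesis
    apply (rule eq_hull0[of "S - {v,w}" v w m x a])
    using assms by (auto simp only: e2 finite_Diff insert_iff Diff_iff singleton_iff)
qed

lemma mid_notin:
  fixes S :: "'a::euclidean_space set"
  assumes "\<not> affine_dependent S" "v \<in> S" "w \<in> S" "v \<noteq> w" "m = (1/2) *\<^sub>R (v + w)"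
  shows "m \<notin> S"
proof
  assume "m \<in> S"
  then have ex: "m extreme_point_of (convex hull S)"
    using extreme_point_of_convex_hull_affine_independent[OF assms(1)] by blast
  have "m \<in> open_segment v w" using midpoint_in_open_segment[of v w] assms(4,5)
    by (simp add: midpoint_def)
  moreover have "v \<in> convex hull S" "w \<in> convex hull S" using assms(2,3) by (auto intro: hull_inc)
  ultimately show False using ex unfolding extreme_point_of_def by blast
qed

lemma mid_in_hull:
  assumes "v \<in> convex hull T" "w \<in> convex hull T" "m = (1/2) *\<^sub>R (v + w)"
  shows "m \<in> convex hull T"
proof -
  have "(1/2) *\<^sub>R v + (1/2) *\<^sub>R w \<in> convex hull T"
    by (rule convexD[OF convex_convex_hull]) (use assms in auto)
  then show ?thesis using assms(3) by (simp add: scaleR_add_right)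
qed

lemma cut_common:
  fixes S :: "'a::euclidean_space set"
  assumes ai: "\<not> affine_dependent S" and vw: "v \<in> S" "w \<in> S" "v \<noteq> w"
    and m: "m = (1/2) *\<^sub>R (v + w)" and T: "T \<subseteq> S"
    and x: "x \<in> convex hull T" "x \<in> convex hull (insert m (S - {v}))"
  obtains a where "bary S x a" "\<forall>s\<in>S-T. a s = 0" "a v \<le> a w"
proof -
  have fin: "finite S" using ai aff_independent_finite by blast
  have mS: "m \<notin> S" using mid_notin[OF ai vw m] .
  obtain a where a: "bary S x a" "\<forall>s\<in>S-T. a s = 0"
    using x(1) unfolding hull_sub_iff[OF fin T] by blast
  obtain b where b: "bary S x b" "b v \<le> b w"
    using x(2) unfolding half_iff[OF fin vw mS m] by blast
  have "a v = b v" "a w = b w"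
    using bary_uniq[OF ai a(1) b(1)] vw by auto
  then have "a v \<le> a w" using b(2) by simp
  then show ?thesis using that a by blast
qed

lemma cut1:
  fixes S :: "'a::euclidean_space set"
  assumes ai: "\<not> affine_dependent S" and vw: "v \<in> S" "w \<in> S" "v \<noteq> w"
    and m: "m = (1/2) *\<^sub>R (v + w)" and T: "T \<subseteq> S" "\<not> (v \<in> T \<and> w \<in> T)"
  shows "convex hull T \<inter> convex hull (insert m (S - {v})) = convex hull (T - {v})"
proof
  have fin: "finite S" using ai aff_independent_finite by blast
  show "convex hull T \<inter> convex hull (insert m (S - {v})) \<subseteq> convex hull (T - {v})"
  proof
    fix x assume "x \<in> convex hull T \<inter> convex hull (insert m (S - {v}))"
    then obtain a where a: "bary S x a" "\<forall>s\<in>S-T. a s = 0" "a v \<le> a w"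
      using cut_common[OF ai vw m T(1)] by blast
    have "a v = 0"
    proof (cases "v \<in> T")
      case True
      then have "w \<notin> T" using T by blast
      then have "a w = 0" using a vw by auto
      moreover have "a v \<ge> 0" using a(1) vw unfolding bary_def by auto
      ultimately show ?thesis using a(3) by linarith
    next
      case False then show ?thesis using a vw by auto
    qed
    then have "\<forall>s\<in>S-(T-{v}). a s = 0" using a by auto
    moreover have Ts: "T - {v} \<subseteq> S" using T by blast
    ultimately show "x \<in> convex hull (T - {v})"
      unfolding hull_sub_iff[OF fin Ts] using a(1) by blast
  qed
  show "convex hull (T - {v}) \<subseteq> convex hull T \<inter> convex hull (insert m (S - {v}))"
  proof (rule Int_greatest)
    show "convex hull (T - {v}) \<subseteq> convex hull T" by (rule hull_mono) blast
    show "convex hull (T - {v}) \<subseteq> convex hull (insert m (S - {v}))" by (rule hull_mono) (use T in blast)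
  qed
qed

lemma cut2:
  fixes S :: "'a::euclidean_space set"
  assumes ai: "\<not> affine_dependent S" and vw: "v \<in> S" "w \<in> S" "v \<noteq> w"
    and m: "m = (1/2) *\<^sub>R (v + w)" and T: "T \<subseteq> S" "v \<in> T" "w \<in> T"
  shows "convex hull T \<inter> convex hull (insert m (S - {v})) = convex hull (insert m (T - {v}))"
proof
  have fin: "finite S" using ai aff_independent_finite by blast
  have finT: "finite T" using fin T finite_subset by blast
  have mS: "m \<notin> S" using mid_notin[OF ai vw m] .
  show "convex hull T \<inter> convex hull (insert m (S - {v})) \<subseteq> convex hull (insert m (T - {v}))"
  proof
    fix x assume "x \<in> convex hull T \<inter> convex hull (insert m (S - {v}))"
    then obtain a where a: "bary S x a" "\<forall>s\<in>S-T. a s = 0" "a v \<le> a w"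
      using cut_common[OF ai vw m T(1)] by blast
    have "bary T x a" using bary_restrict[OF fin T(1)] a by blast
    moreover have mT: "m \<notin> T" using mS T by blast
    ultimately show "x \<in> convex hull (insert m (T - {v}))"
      unfolding half_iff[OF finT T(2,3) vw(3) mT m] using a(3) by blast
  qed
  have vT: "v \<in> convex hull T" "w \<in> convex hull T" using T(2,3) by (auto intro: hull_inc)
  have "m \<in> convex hull T" by (rule mid_in_hull[OF vT m])
  then have mT2: "insert m (T - {v}) \<subseteq> convex hull T" by (auto intro: hull_inc)
  show "convex hull (insert m (T - {v})) \<subseteq> convex hull T \<inter> convex hull (insert m (S - {v}))"
  proof (rule Int_greatest)
    show "convex hull (insert m (T - {v})) \<subseteq> convex hull T"
      by (rule convex_hull_subset) (fact mT2)
    show "convex hull (insert m (T - {v})) \<subseteq> convex hull (insert m (S - {v}))"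
      by (rule hull_mono) (use T in blast)
  qed
qed

lemma cut3:
  fixes S :: "'a::euclidean_space set"
  assumes ai: "\<not> affine_dependent S" and vw: "v \<in> S" "w \<in> S" "v \<noteq> w"
    and m: "m = (1/2) *\<^sub>R (v + w)"
  shows "convex hull (insert m (S - {v})) \<inter> convex hull (insert m (S - {w}))
       = convex hull (insert m (S - {v,w}))"
proof
  have fin: "finite S" using ai aff_independent_finite by blast
  have mS: "m \<notin> S" using mid_notin[OF ai vw m] .
  have m': "m = (1/2) *\<^sub>R (w + v)" using m by (simp add: add.commute)
  show "convex hull (insert m (S - {v})) \<inter> convex hull (insert m (S - {w}))
       \<subseteq> convex hull (insert m (S - {v,w}))"
  proof
    fix x assume x: "x \<in> convex hull (insert m (S - {v})) \<inter> convex hull (insert m (S - {w}))"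
    have x1: "x \<in> convex hull (insert m (S - {v}))" "x \<in> convex hull (insert m (S - {w}))"
      using x by auto
    obtain a where a: "bary S x a" "a v \<le> a w" using x1(1) unfolding half_iff[OF fin vw mS m] by blast
    obtain b where b: "bary S x b" "b w \<le> b v"
      using x1(2) unfolding half_iff[OF fin vw(2,1) vw(3)[symmetric] mS m'] by blast
    have "a v = b v" "a w = b w" using bary_uniq[OF ai a(1) b(1)] vw by auto
    then have "a v = a w" using a(2) b(2) by linarith
    then show "x \<in> convex hull (insert m (S - {v,w}))"
      using eq_hull[OF fin vw mS m a(1)] by blast
  qed
  show "convex hull (insert m (S - {v,w})) \<subseteq> convex hull (insert m (S - {v})) \<inter> convex hull (insert m (S - {w}))"
    by (rule Int_greatest; rule hull_mono; blast)
qed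



lemma ep_hull:
  fixes S :: "'a::euclidean_space set"
  assumes "\<not> affine_dependent S"
  shows "extreme_points (convex hull S) = S"
  using extreme_point_of_convex_hull_affine_independent[OF assms]
  unfolding extreme_points_def by blast

lemma child_indep:
  fixes S :: "'a::euclidean_space set"
  assumes ai: "\<not> affine_dependent S" and vw: "v \<in> S" "w \<in> S" "v \<noteq> w"
    and m: "m = (1/2) *\<^sub>R (v + w)"
  shows "\<not> affine_dependent (insert m (S - {v}))" "card (insert m (S - {v})) = card S"
proof -
  have fin: "finite S" using ai aff_independent_finite by blast
  have mS: "m \<notin> S" using mid_notin[OF ai vw m] .
  have cp: "card S > 0" using fin vw card_gt_0_iff by blast
  have c: "card (insert m (S - {v})) = card S"
    using fin mS vw cp by simp
  have vh: "v \<in> convex hull S" "w \<in> convex hull S" using vw(1,2) by (auto intro: hull_inc)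
  have "m \<in> convex hull S" by (rule mid_in_hull[OF vh m])
  then have "m \<in> affine hull S" using convex_hull_subset_affine_hull by blast
  then have "insert m (S - {v}) \<subseteq> affine hull S" by (auto intro: hull_inc)
  then have h1: "affine hull (insert m (S - {v})) \<subseteq> affine hull S"
    by (rule hull_minimal) (rule affine_affine_hull)
  have mh: "m \<in> affine hull (insert m (S - {v}))" "w \<in> affine hull (insert m (S - {v}))"
    using vw by (auto intro: hull_inc)
  have "(2::real) *\<^sub>R m + (-1::real) *\<^sub>R w \<in> affine hull (insert m (S - {v}))"
    by (rule mem_affine[OF affine_affine_hull mh]) simp
  moreover have "(2::real) *\<^sub>R m + (-1::real) *\<^sub>R w = v"
    by (simp add: m scaleR_add_right)
  ultimately have "v \<in> affine hull (insert m (S - {v}))" by simp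
  then have "S \<subseteq> affine hull (insert m (S - {v}))" by (auto intro: hull_inc)
  then have h2: "affine hull S \<subseteq> affine hull (insert m (S - {v}))"
    by (rule hull_minimal) (rule affine_affine_hull)
  have "aff_dim (insert m (S - {v})) = aff_dim S"
    using h1 h2 aff_dim_affine_hull by (metis subset_antisym)
  moreover have "aff_dim S = int (card S) - 1" using ai affine_independent_iff_card by blast
  ultimately show "\<not> affine_dependent (insert m (S - {v}))"
    using c fin affine_independent_iff_card by (metis finite_Diff finite_insert)
  show "card (insert m (S - {v})) = card S" by (fact c)
qed

lemma seg_face:
  fixes S :: "'a::euclidean_space set"
  assumes ai: "\<not> affine_dependent S" and "v \<noteq> w"
  shows "closed_segment v w face_of convex hull S \<longleftrightarrow> v \<in> S \<and> w \<in> S"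
proof
  assume "closed_segment v w face_of convex hull S"
  then obtain c where c: "c \<subseteq> S" "convex hull {v,w} = convex hull c"
    using face_of_convex_hull_affine_independent[OF ai] segment_convex_hull by metis
  have "\<not> affine_dependent c" using ai c(1) affine_dependent_subset by blast
  then have "c = {v,w}" using ep_hull[of c] ep_hull[of "{v,w}"] c(2) by simp
  then show "v \<in> S \<and> w \<in> S" using c(1) by blast
next
  assume "v \<in> S \<and> w \<in> S"
  then show "closed_segment v w face_of convex hull S"
    unfolding face_of_convex_hull_affine_independent[OF ai] segment_convex_hull
    by (intro exI[of _ "{v,w}"]) auto
qed



definition ok :: "nat \<Rightarrow> 'a::euclidean_space set \<Rightarrow> bool" where
  "ok n C \<longleftrightarrow> \<not> affine_dependent (extreme_points C) \<and> card (extreme_points C) = n + 1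
     \<and> C = convex hull (extreme_points C)"

definition binv :: "nat \<Rightarrow> 'a::euclidean_space set \<Rightarrow> 'a set set \<Rightarrow> bool" where
  "binv n C0 K \<longleftrightarrow> finite K \<and> (\<forall>C\<in>K. ok n C) \<and> C0 \<subseteq> \<Union>K
     \<and> (\<forall>C\<in>K. \<forall>D\<in>K. C \<inter> D = convex hull (extreme_points C \<inter> extreme_points D))"

definition kid :: "'a::euclidean_space \<Rightarrow> 'a \<Rightarrow> 'a set \<Rightarrow> 'a set" where
  "kid m z C = convex hull (insert m (extreme_points C - {z}))"

lemma kid_facts:
  fixes C :: "'a::euclidean_space set"
  assumes okC: "ok n C" and vw: "v \<in> extreme_points C" "w \<in> extreme_points C" "v \<noteq> w"
    and m: "m = (1/2) *\<^sub>R (v + w)"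
  shows "ok n (kid m v C)" "extreme_points (kid m v C) = insert m (extreme_points C - {v})"
    "kid m v C \<subseteq> C" "m \<notin> extreme_points C" "m \<in> C"
proof -
  let ?S = "extreme_points C"
  have ai: "\<not> affine_dependent ?S" and cS: "card ?S = n + 1" and Ch: "C = convex hull ?S"
    using okC unfolding ok_def by auto
  note ci = child_indep[OF ai vw m]
  show ep: "extreme_points (kid m v C) = insert m (?S - {v})"
    unfolding kid_def by (rule ep_hull[OF ci(1)])
  show "ok n (kid m v C)" unfolding ok_def ep using ci cS by (simp add: kid_def)
  show "m \<notin> ?S" by (rule mid_notin[OF ai vw m])
  have vh: "v \<in> convex hull ?S" "w \<in> convex hull ?S" using vw(1,2) by (auto intro: hull_inc)
  have mC: "m \<in> convex hull ?S" by (rule mid_in_hull[OF vh m])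
  then show "m \<in> C" using Ch by simp
  have "insert m (?S - {v}) \<subseteq> convex hull ?S" using mC by (auto intro: hull_inc)
  then have "kid m v C \<subseteq> convex hull ?S" unfolding kid_def by (rule convex_hull_subset)
  then show "kid m v C \<subseteq> C" using Ch by simp
qed

lemma cover_split:
  fixes C :: "'a::euclidean_space set"
  assumes okC: "ok n C" and vw: "v \<in> extreme_points C" "w \<in> extreme_points C" "v \<noteq> w"
    and m: "m = (1/2) *\<^sub>R (v + w)"
  shows "C \<subseteq> kid m v C \<union> kid m w C"
proof
  let ?S = "extreme_points C"
  have ai: "\<not> affine_dependent ?S" and Ch: "C = convex hull ?S"
    using okC unfolding ok_def by auto
  have fin: "finite ?S" using ai aff_independent_finite by blast
  have mS: "m \<notin> ?S" by (rule mid_notin[OF ai vw m])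
  have m': "m = (1/2) *\<^sub>R (w + v)" using m by (simp add: add.commute)
  fix x assume "x \<in> C"
  then obtain a where a: "bary ?S x a" using hull_iff_bary[OF fin] Ch by auto
  show "x \<in> kid m v C \<union> kid m w C"
  proof (cases "a v \<le> a w")
    case True
    then have "x \<in> convex hull (insert m (?S - {v}))"
      unfolding half_iff[OF fin vw mS m] using a by blast
    then show ?thesis unfolding kid_def by blast
  next
    case False
    then have "x \<in> convex hull (insert m (?S - {w}))"
      unfolding half_iff[OF fin vw(2,1) vw(3)[symmetric] mS m'] using a by auto
    then show ?thesis unfolding kid_def by blast
  qed
qed

lemma m_notin_ep:
  fixes C :: "'a::euclidean_space set"
  assumes inv: "binv n C0 K" and A: "A \<in> K" and C: "C \<in> K"
    and vw: "v \<in> extreme_points C" "w \<in> extreme_points C" "v \<noteq> w"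
    and m: "m = (1/2) *\<^sub>R (v + w)"
  shows "m \<notin> extreme_points A"
proof
  assume mA: "m \<in> extreme_points A"
  have okC: "ok n C" using inv C unfolding binv_def by blast
  have mC: "m \<in> C" and mS: "m \<notin> extreme_points C" using kid_facts[OF okC vw m] by auto
  have AC: "A \<inter> C = convex hull (extreme_points A \<inter> extreme_points C)"
    using inv A C unfolding binv_def by blast
  have exA: "m extreme_point_of A" using mA unfolding extreme_points_def by blast
  then have "m \<in> A" unfolding extreme_point_of_def by blast
  then have mT: "m \<in> convex hull (extreme_points A \<inter> extreme_points C)" using AC mC by blast
  have "m extreme_point_of convex hull (extreme_points A \<inter> extreme_points C)"
    using exA mT AC unfolding extreme_point_of_def by blast
  then have "m \<in> extreme_points A \<inter> extreme_points C" by (rule extreme_point_of_convex_hull)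
  then show False using mS by blast
qed

lemma PO:
  fixes C :: "'a::euclidean_space set"
  assumes inv: "binv n C0 K" and A: "A \<in> K" and C: "C \<in> K"
    and vw: "v \<in> extreme_points C" "w \<in> extreme_points C" "v \<noteq> w"
    and m: "m = (1/2) *\<^sub>R (v + w)"
    and nA: "\<not> (v \<in> extreme_points A \<and> w \<in> extreme_points A)"
  shows "A \<inter> kid m v C = convex hull (extreme_points A \<inter> extreme_points (kid m v C))"
proof -
  let ?S = "extreme_points C" and ?T = "extreme_points A \<inter> extreme_points C"
  have okC: "ok n C" using inv C unfolding binv_def by blast
  have ai: "\<not> affine_dependent ?S" using okC unfolding ok_def by auto
  note kf = kid_facts[OF okC vw m]
  have AC: "A \<inter> C = convex hull ?T"
    using inv A C unfolding binv_def by blast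
  have mA: "m \<notin> extreme_points A" by (rule m_notin_ep[OF inv A C vw m])
  have "A \<inter> kid m v C = (A \<inter> C) \<inter> kid m v C" using kf(3) by blast
  also have "\<dots> = convex hull ?T \<inter> convex hull (insert m (?S - {v}))"
    unfolding AC kid_def ..
  also have "\<dots> = convex hull (?T - {v})"
    by (rule cut1[OF ai vw m]) (use nA in auto)
  also have "?T - {v} = extreme_points A \<inter> extreme_points (kid m v C)"
    unfolding kf(2) using mA by blast
  finally show ?thesis .
qed

lemma CC0:
  fixes C1 :: "'a::euclidean_space set"
  assumes inv: "binv n C0 K" and C: "C1 \<in> K" "C2 \<in> K"
    and vw1: "v \<in> extreme_points C1" "w \<in> extreme_points C1"
    and vw2: "v \<in> extreme_points C2" "w \<in> extreme_points C2" and vw: "v \<noteq> w"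
    and m: "m = (1/2) *\<^sub>R (v + w)"
    and z: "z1 = v \<or> z1 = w" "z2 = v \<or> z2 = w"
  shows "kid m z1 C1 \<inter> kid m z2 C2 =
         convex hull (extreme_points (kid m z1 C1) \<inter> extreme_points (kid m z2 C2))"
proof -
  have m': "m = (1/2) *\<^sub>R (w + v)" using m by (simp add: add.commute)
  have ok1: "ok n C1" and ok2: "ok n C2" using inv C unfolding binv_def by auto
  have ai1: "\<not> affine_dependent (extreme_points C1)" using ok1 unfolding ok_def by auto
  have ai2: "\<not> affine_dependent (extreme_points C2)" using ok2 unfolding ok_def by auto
  let ?R = "extreme_points C1 \<inter> extreme_points C2"
  have aiR: "\<not> affine_dependent ?R" using ai1 affine_dependent_subset by blast
  have CR: "C1 \<inter> C2 = convex hull ?R" using inv C unfolding binv_def by blast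
  obtain z1' where z1': "z1' \<in> extreme_points C1" "z1 \<in> extreme_points C1" "z1 \<noteq> z1'"
      "m = (1/2) *\<^sub>R (z1 + z1')" "z1' \<in> ?R" "z1 \<in> ?R" "{z1,z1'} = {v,w}"
  proof (cases "z1 = v")
    case True
    show ?thesis by (rule that[of w]) (use True vw1 vw2 vw m in auto)
  next
    case False
    then have "z1 = w" using z(1) by blast
    then show ?thesis by (intro that[of v]) (use vw1 vw2 vw m' in auto)
  qed
  obtain z2' where z2': "z2' \<in> extreme_points C2" "z2 \<in> extreme_points C2" "z2 \<noteq> z2'"
      "m = (1/2) *\<^sub>R (z2 + z2')" "z2' \<in> ?R" "z2 \<in> ?R" "{z2,z2'} = {v,w}"
  proof (cases "z2 = v")
    case True
    show ?thesis by (rule that[of w]) (use True vw1 vw2 vw m in auto)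
  next
    case False
    then have "z2 = w" using z(2) by blast
    then show ?thesis by (intro that[of v]) (use vw1 vw2 vw m' in auto)
  qed
  note k1 = kid_facts[OF ok1 z1'(2,1,3,4)]
  note k2 = kid_facts[OF ok2 z2'(2,1,3,4)]
  have "kid m z1 C1 \<inter> kid m z2 C2 = (convex hull ?R \<inter> kid m z1 C1) \<inter> (convex hull ?R \<inter> kid m z2 C2)"
    using k1(3) k2(3) CR by blast
  also have "convex hull ?R \<inter> kid m z1 C1 = convex hull (insert m (?R - {z1}))"
    unfolding kid_def by (rule cut2[OF ai1 z1'(2,1,3,4)]) (use z1' in auto)
  also have "convex hull ?R \<inter> kid m z2 C2 = convex hull (insert m (?R - {z2}))"
  proof -
    have Req: "?R = extreme_points C2 \<inter> extreme_points C1" by blast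
    show ?thesis unfolding kid_def Req
      by (rule cut2[OF ai2 z2'(2,1,3,4)]) (use z2' in auto)
  qed
  finally have eq: "kid m z1 C1 \<inter> kid m z2 C2 =
     convex hull (insert m (?R - {z1})) \<inter> convex hull (insert m (?R - {z2}))" .
  show ?thesis
  proof (cases "z1 = z2")
    case True
    have "extreme_points (kid m z1 C1) \<inter> extreme_points (kid m z2 C2) = insert m (?R - {z1})"
      using k1(2) k2(2) True by auto
    then show ?thesis using eq True by simp
  next
    case False
    then have z21: "z2 = z1'" using z1'(7) z2'(7) z by auto
    have "convex hull (insert m (?R - {z1})) \<inter> convex hull (insert m (?R - {z1'}))
        = convex hull (insert m (?R - {z1, z1'}))"
      by (rule cut3[OF aiR z1'(6,5,3,4)])
    moreover have "extreme_points (kid m z1 C1) \<inter> extreme_points (kid m z2 C2) = insert m (?R - {z1, z1'})"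
      using k1(2) k2(2) z21 z1'(3) by auto
    ultimately show ?thesis using eq z21 by simp
  qed
qed



lemma bisect_eq:
  fixes K :: "'a::euclidean_space set set"
  assumes inv: "binv n C0 K" and vw: "v \<noteq> w" and m: "m = (1/2) *\<^sub>R (v + w)"
  shows "bisect v w K = {C\<in>K. \<not> (v \<in> extreme_points C \<and> w \<in> extreme_points C)}
     \<union> kid m v ` {C\<in>K. v \<in> extreme_points C \<and> w \<in> extreme_points C}
     \<union> kid m w ` {C\<in>K. v \<in> extreme_points C \<and> w \<in> extreme_points C}"
proof -
  have f: "closed_segment v w face_of C \<longleftrightarrow> v \<in> extreme_points C \<and> w \<in> extreme_points C"
    if "C \<in> K" for C
  proof -
    have ai: "\<not> affine_dependent (extreme_points C)" and Ch: "C = convex hull (extreme_points C)"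
      using inv that unfolding binv_def ok_def by auto
    show ?thesis using seg_face[OF ai vw] Ch by simp
  qed
  have e1: "{C \<in> K. \<not> closed_segment v w face_of C} = {C\<in>K. \<not> (v \<in> extreme_points C \<and> w \<in> extreme_points C)}"
    using f by blast
  have e2: "{C \<in> K. closed_segment v w face_of C} = {C\<in>K. v \<in> extreme_points C \<and> w \<in> extreme_points C}"
    using f by blast
  show ?thesis unfolding bisect_def e1 e2 kid_def m by blast
qed

lemma step_inv:
  fixes K :: "'a::euclidean_space set set"
  assumes inv: "binv n C0 K" and vw: "v \<noteq> w"
  shows "binv n C0 (bisect v w K)"
proof -
  define m where "m = (1/2) *\<^sub>R (v + w)"
  have m': "m = (1/2) *\<^sub>R (w + v)" using m_def by (simp add: add.commute)
  define P where "P = {C\<in>K. \<not> (v \<in> extreme_points C \<and> w \<in> extreme_points C)}"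
  define B where "B = {C\<in>K. v \<in> extreme_points C \<and> w \<in> extreme_points C}"
  have eq: "bisect v w K = P \<union> kid m v ` B \<union> kid m w ` B"
    unfolding P_def B_def by (rule bisect_eq[OF inv vw m_def])
  have finK: "finite K" and okK: "\<forall>C\<in>K. ok n C" and cov: "C0 \<subseteq> \<Union>K"
    and pw: "\<forall>C\<in>K. \<forall>D\<in>K. C \<inter> D = convex hull (extreme_points C \<inter> extreme_points D)"
    using inv unfolding binv_def by auto
  have fin: "finite (bisect v w K)" unfolding eq P_def B_def using finK by auto
  have okB: "ok n (kid m z C)" if "C \<in> B" "z = v \<or> z = w" for C z
  proof -
    have okC: "ok n C" using okK that B_def by auto
    have vC: "v \<in> extreme_points C" "w \<in> extreme_points C" using that B_def by auto
    show ?thesis using that(2)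
    proof
      assume "z = v" then show ?thesis using kid_facts(1)[OF okC vC vw m_def] by simp
    next
      assume "z = w" then show ?thesis using kid_facts(1)[OF okC vC(2,1) vw[symmetric] m'] by simp
    qed
  qed
  have ok': "\<forall>C\<in>bisect v w K. ok n C" unfolding eq using okK okB P_def by auto
  have cov': "C0 \<subseteq> \<Union>(bisect v w K)"
  proof
    fix x assume "x \<in> C0"
    then obtain C where C: "C \<in> K" "x \<in> C" using cov by blast
    show "x \<in> \<Union>(bisect v w K)"
    proof (cases "C \<in> P")
      case True then show ?thesis unfolding eq using C by blast
    next
      case False
      then have CB: "C \<in> B" using C unfolding P_def B_def by blast
      then have "C \<subseteq> kid m v C \<union> kid m w C"
        using cover_split[of n C v w m] okK vw m_def unfolding B_def by auto
      then show ?thesis unfolding eq using C CB by blast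
    qed
  qed
  have PO': "A \<inter> kid m z C = convex hull (extreme_points A \<inter> extreme_points (kid m z C))"
    if "A \<in> P" "C \<in> B" "z = v \<or> z = w" for A C z
    using that
  proof (elim disjE)
    assume "z = v"
    then show ?thesis using PO[OF inv, of A C v w m] that vw m_def unfolding P_def B_def by auto
  next
    assume "z = w"
    then show ?thesis using PO[OF inv, of A C w v m] that vw m' unfolding P_def B_def by auto
  qed
  have CC: "kid m z1 C1 \<inter> kid m z2 C2 =
         convex hull (extreme_points (kid m z1 C1) \<inter> extreme_points (kid m z2 C2))"
    if "C1 \<in> B" "C2 \<in> B" "z1 = v \<or> z1 = w" "z2 = v \<or> z2 = w" for C1 C2 z1 z2
    by (rule CC0[OF inv, of C1 C2 v w m z1 z2]) (use that vw m_def B_def in auto)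
  have pw': "\<forall>X\<in>bisect v w K. \<forall>Y\<in>bisect v w K. X \<inter> Y = convex hull (extreme_points X \<inter> extreme_points Y)"
  proof (intro ballI)
    fix X Y assume X: "X \<in> bisect v w K" and Y: "Y \<in> bisect v w K"
    have XX: "X \<in> P \<or> (\<exists>C z. C \<in> B \<and> (z = v \<or> z = w) \<and> X = kid m z C)" using X unfolding eq by blast
    have YY: "Y \<in> P \<or> (\<exists>C z. C \<in> B \<and> (z = v \<or> z = w) \<and> Y = kid m z C)" using Y unfolding eq by blast
    show "X \<inter> Y = convex hull (extreme_points X \<inter> extreme_points Y)"
    proof (cases "X \<in> P")
      case XP: True
      show ?thesis
      proof (cases "Y \<in> P")
        case True then show ?thesis using XP pw unfolding P_def by auto
      next
        case False
        then obtain C z where "C \<in> B" "z = v \<or> z = w" "Y = kid m z C" using YY by blast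
        then show ?thesis using PO'[OF XP] by blast
      qed
    next
      case XN: False
      then obtain C1 z1 where c1: "C1 \<in> B" "z1 = v \<or> z1 = w" "X = kid m z1 C1" using XX by blast
      show ?thesis
      proof (cases "Y \<in> P")
        case True
        then show ?thesis using PO'[OF True c1(1,2)] c1(3) by (simp add: Int_commute)
      next
        case False
        then obtain C2 z2 where "C2 \<in> B" "z2 = v \<or> z2 = w" "Y = kid m z2 C2" using YY by blast
        then show ?thesis using CC[OF c1(1)] c1 by blast
      qed
    qed
  qed
  show ?thesis unfolding binv_def using fin ok' cov' pw' by blast
qed



lemma norm_facts:
  fixes N :: "'a::real_vector \<Rightarrow> real"
  assumes "is_norm N"
  shows N0: "N 0 = 0" and Nneg: "0 \<le> N x" and Nsym: "N (a - b) = N (b - a)"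
    and Nmid: "N ((1/2) *\<^sub>R (v + w) - u) \<le> (N (v - u) + N (w - u)) / 2"
    and Nhalf: "N ((1/2) *\<^sub>R (v + w) - w) = N (v - w) / 2"
    and Npos: "x \<noteq> 0 \<Longrightarrow> 0 < N x"
proof -
  have z: "\<And>x. N x = 0 \<longleftrightarrow> x = 0" and sc: "\<And>a x. N (a *\<^sub>R x) = \<bar>a\<bar> * N x"
    and tri: "\<And>x y. N (x + y) \<le> N x + N y"
    using assms unfolding is_norm_def by auto
  show N0: "N 0 = 0" using z by simp
  have nx: "N (-y) = N y" for y using sc[of "-1" y] by simp
  have "N 0 \<le> N y + N (-y)" for y using tri[of y "-y"] by simp
  then have "0 \<le> N y + N y" for y using N0 nx by simp
  then have nn: "0 \<le> N y" for y by simp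
  show "0 \<le> N x" by (rule nn)
  show "N (a - b) = N (b - a)" using nx[of "a - b"] by simp
  have "(1/2) *\<^sub>R (v + w) - u = (1/2) *\<^sub>R (v - u) + (1/2) *\<^sub>R (w - u)"
    by (simp add: algebra_simps) (simp add: scaleR_add_left[symmetric])
  then show "N ((1/2) *\<^sub>R (v + w) - u) \<le> (N (v - u) + N (w - u)) / 2"
    using tri[of "(1/2) *\<^sub>R (v - u)" "(1/2) *\<^sub>R (w - u)"] sc by simp
  have "(1/2) *\<^sub>R (v + w) - w = (1/2) *\<^sub>R (v - w)"
    by (simp add: algebra_simps) (simp add: scaleR_add_left[symmetric])
  then show "N ((1/2) *\<^sub>R (v + w) - w) = N (v - w) / 2" using sc by simp
  show "x \<noteq> 0 \<Longrightarrow> 0 < N x" using nn[of x] z[of x] by linarith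
qed

lemma ok_basic:
  assumes "ok n C"
  shows "finite (extreme_points C)" "\<not> affine_dependent (extreme_points C)"
    "card (extreme_points C) = n + 1" "C = convex hull (extreme_points C)"
  using assms aff_independent_finite unfolding ok_def by blast+

lemma edges_finite:
  assumes "binv n C0 K"
  shows "finite {N (v - v') | C v v'. C \<in> K \<and> v \<in> extreme_points C \<and> v' \<in> extreme_points C}"
proof -
  have "{N (v - v') | C v v'. C \<in> K \<and> v \<in> extreme_points C \<and> v' \<in> extreme_points C}
     = (\<Union>C\<in>K. (\<lambda>p. N (fst p - snd p)) ` (extreme_points C \<times> extreme_points C))"
    (is "?A = ?B")
  proof
    show "?A \<subseteq> ?B"
    proof
      fix x assume "x \<in> ?A"
      then obtain C a b where "x = N (a - b)" "C \<in> K" "a \<in> extreme_points C" "b \<in> extreme_points C"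
        by blast
      then show "x \<in> ?B"
        by (intro UN_I[of C]) (auto intro: image_eqI[of _ _ "(a,b)"])
    qed
    show "?B \<subseteq> ?A" by force
  qed
  moreover have "finite K" "\<forall>C\<in>K. finite (extreme_points C)"
    using assms ok_basic(1) unfolding binv_def by auto
  ultimately show ?thesis by simp
qed

lemma mesh_longest:
  assumes "binv n C0 K" "is_longest_edge N v w K"
  shows "mesh_size N K = N (v - w)"
  unfolding mesh_size_def
proof (rule Max_eqI)
  show "finite {N (v - v') | C v v'. C \<in> K \<and> v \<in> extreme_points C \<and> v' \<in> extreme_points C}"
    by (rule edges_finite[OF assms(1)])
  show "\<And>y. y \<in> {N (v - v') | C v v'. C \<in> K \<and> v \<in> extreme_points C \<and> v' \<in> extreme_points C} \<Longrightarrow> y \<le> N (v - w)"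
    using assms(2) unfolding is_longest_edge_def is_edge_of_def by blast
  show "N (v - w) \<in> {N (v - v') | C v v'. C \<in> K \<and> v \<in> extreme_points C \<and> v' \<in> extreme_points C}"
    using assms(2) unfolding is_longest_edge_def is_edge_of_def by blast
qed

lemma longest_neq:
  assumes nrm: "is_norm N" and inv: "binv n C0 K" and n: "n \<ge> 1" and le: "is_longest_edge N v w K"
  shows "v \<noteq> w"
proof -
  obtain C where C: "C \<in> K" using le unfolding is_longest_edge_def is_edge_of_def by blast
  have okC: "ok n C" using inv C unfolding binv_def by blast
  have "card (extreme_points C) \<ge> 2" using ok_basic(3)[OF okC] n by simp
  then obtain a b where ab: "a \<in> extreme_points C" "b \<in> extreme_points C" "a \<noteq> b"
  proof -
    have "\<not> card (extreme_points C) \<le> Suc 0" using \<open>card (extreme_points C) \<ge> 2\<close> by simp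
    then have "\<not> (\<forall>x\<in>extreme_points C. \<forall>y\<in>extreme_points C. x = y)"
      unfolding card_le_Suc0_iff_eq[OF ok_basic(1)[OF okC]] .
    then show ?thesis using that by blast
  qed
  have "is_edge_of a b K" unfolding is_edge_of_def using C ab by blast
  then have "N (a - b) \<le> N (v - w)" using le unfolding is_longest_edge_def by blast
  moreover have "0 < N (a - b)" using Npos[OF nrm] ab(3) by simp
  ultimately show ?thesis
  proof (intro notI)
    assume "v = w"
    then have "N (v - w) = 0" using N0[OF nrm] by simp
    then show False using \<open>N (a - b) \<le> N (v - w)\<close> \<open>0 < N (a - b)\<close> by linarith
  qed
qed

lemma edge_bound:
  assumes nrm: "is_norm N" and inv: "binv n C0 K" and le: "is_longest_edge N v w K" and vw: "v \<noteq> w"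
    and X: "X \<in> bisect v w K" and ab: "a \<in> extreme_points X" "b \<in> extreme_points X"
  shows "N (a - b) \<le> N (v - w)"
proof -
  define m where "m = (1/2) *\<^sub>R (v + w)"
  have m': "m = (1/2) *\<^sub>R (w + v)" using m_def by (simp add: add.commute)
  have edge: "N (x - y) \<le> N (v - w)" if "C \<in> K" "x \<in> extreme_points C" "y \<in> extreme_points C" for C x y
    using le that unfolding is_longest_edge_def is_edge_of_def by blast
  have X': "X \<in> K \<or> (\<exists>C z. C \<in> K \<and> v \<in> extreme_points C \<and> w \<in> extreme_points C \<and> (z = v \<or> z = w) \<and> X = kid m z C)"
    using X unfolding bisect_eq[OF inv vw m_def] by blast
  show ?thesis
  proof (cases "X \<in> K")
    case True then show ?thesis using edge ab by blast
  next
    case False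
    then obtain C z where C: "C \<in> K" "v \<in> extreme_points C" "w \<in> extreme_points C" "z = v \<or> z = w" "X = kid m z C"
      using X' by blast
    have okC: "ok n C" using inv C unfolding binv_def by blast
    have epX: "extreme_points X \<subseteq> insert m (extreme_points C)"
      using C(4,5) kid_facts(2)[OF okC C(2,3) vw m_def] kid_facts(2)[OF okC C(3,2) vw[symmetric] m'] by auto
    have mb: "N (m - y) \<le> N (v - w)" if "y \<in> extreme_points C" for y
    proof -
      have h1: "N (m - y) \<le> (N (v - y) + N (w - y)) / 2" using Nmid[OF nrm, of v w y] unfolding m_def .
      have h2: "N (v - y) \<le> N (v - w)" "N (w - y) \<le> N (v - w)"
        using edge[OF C(1) C(2) that] edge[OF C(1) C(3) that] by auto
      show ?thesis using h1 h2 by simp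
    qed
    have nn: "0 \<le> N (v - w)" using Nneg[OF nrm] .
    show ?thesis
    proof (cases "a = m")
      case am: True
      show ?thesis
      proof (cases "b = m")
        case True then show ?thesis using am nn N0[OF nrm] by simp
      next
        case False
        then have "b \<in> extreme_points C" using ab(2) epX by blast
        then show ?thesis using am mb by simp
      qed
    next
      case an: False
      then have aC: "a \<in> extreme_points C" using ab(1) epX by blast
      show ?thesis
      proof (cases "b = m")
        case True then show ?thesis using aC mb[OF aC] Nsym[OF nrm, of m a] by simp
      next
        case False
        then have "b \<in> extreme_points C" using ab(2) epX by blast
        then show ?thesis using aC edge[OF C(1)] by blast
      qed
    qed
  qed
qed

lemma binv_cover:
  fixes K :: "(real^'m) set set"
  assumes inv: "binv CARD('m) C0 K" and Y: "Y \<subseteq> C0"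
  shows "simplicial_cover Y K"
proof -
  have fin: "finite K" and okK: "\<forall>C\<in>K. ok CARD('m) C" and cov: "C0 \<subseteq> \<Union>K"
    and pw: "\<forall>C\<in>K. \<forall>D\<in>K. C \<inter> D = convex hull (extreme_points C \<inter> extreme_points D)"
    using inv unfolding binv_def by auto
  have poly: "polyhedron C \<and> (\<exists>x. x extreme_point_of C)" if "C \<in> K" for C
  proof -
    note o = ok_basic[OF okK[rule_format, OF that]]
    have "extreme_points C \<noteq> {}" using o(3) by auto
    then obtain x where "x \<in> extreme_points C" by blast
    then have "x extreme_point_of C" unfolding extreme_points_def by blast
    moreover have "polyhedron C" using o(1,4) polyhedron_convex_hull by metis
    ultimately show ?thesis by blast
  qed
  have face: "(C \<inter> D) face_of C \<and> (C \<inter> D) face_of D" if "C \<in> K" "D \<in> K" for C D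
  proof -
    note o1 = ok_basic[OF okK[rule_format, OF that(1)]]
    note o2 = ok_basic[OF okK[rule_format, OF that(2)]]
    have e: "C \<inter> D = convex hull (extreme_points C \<inter> extreme_points D)" using pw that by blast
    have "(C \<inter> D) face_of convex hull (extreme_points C)"
      unfolding face_of_convex_hull_affine_independent[OF o1(2)] e by blast
    moreover have "(C \<inter> D) face_of convex hull (extreme_points D)"
      unfolding face_of_convex_hull_affine_independent[OF o2(2)] e by blast
    ultimately show ?thesis unfolding o1(4)[symmetric] o2(4)[symmetric] by blast
  qed
  have bnd: "bounded C" if "C \<in> K" for C
  proof -
    note o = ok_basic[OF okK[rule_format, OF that]]
    show ?thesis using o(1,4) bounded_convex_hull finite_imp_bounded by metis
  qed
  have sim: "int CARD('m) simplex C" if "C \<in> K" for C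
  proof -
    note o = ok_basic[OF okK[rule_format, OF that]]
    have c: "int (card (extreme_points C)) = int CARD('m) + 1" using o(3) by simp
    show ?thesis unfolding simplex_def using o(2) c o(4) by blast
  qed
  have pc: "polyhedral_cover Y K"
    unfolding polyhedral_cover_def
  proof (intro conjI)
    show "finite K" by (fact fin)
    show "\<forall>C\<in>K. polyhedron C \<and> (\<exists>x. x extreme_point_of C)" using poly by blast
    show "Y \<subseteq> \<Union>K" using Y cov by blast
    show "\<forall>C\<in>K. \<forall>D\<in>K. C \<inter> D \<noteq> {} \<longrightarrow> C \<inter> D face_of C \<and> C \<inter> D face_of D"
      using face by blast
  qed
  show ?thesis
    unfolding simplicial_cover_def bounded_polyhedral_cover_def
    using pc bnd sim by blast
qed

lemma binv_init:
  fixes C0 :: "(real^'m) set"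
  assumes "int CARD('m) simplex C0"
  shows "binv CARD('m) C0 {C0}"
proof -
  obtain S where S: "\<not> affine_dependent S" "int (card S) = int CARD('m) + 1" "C0 = convex hull S"
    using assms unfolding simplex_def by blast
  have ep: "extreme_points C0 = S" using ep_hull[OF S(1)] S(3) by simp
  have "ok CARD('m) C0" unfolding ok_def ep using S by simp
  then show ?thesis unfolding binv_def using ep S(3) by simp
qed



definition bb :: "nat \<Rightarrow> (nat \<Rightarrow> nat) \<Rightarrow> nat" where
  "bb J e = Max (insert 0 {Suc k | k. k \<le> J \<and> Suc k \<le> e k})"

lemma bb_fin: "finite (insert 0 {Suc k | k. k \<le> J \<and> Suc k \<le> e k})"
proof -
  have "{Suc k | k. k \<le> J \<and> Suc k \<le> e k} \<subseteq> Suc ` {..J}"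
  proof
    fix x assume "x \<in> {Suc k | k. k \<le> J \<and> Suc k \<le> e k}"
    then obtain k where "x = Suc k" "k \<le> J" by blast
    then show "x \<in> Suc ` {..J}" by simp
  qed
  then show ?thesis using finite_subset by blast
qed

lemma bb_ge:
  assumes "k \<le> J" "Suc k \<le> e k"
  shows "Suc k \<le> bb J e"
proof -
  have "Suc k \<in> {Suc k | k. k \<le> J \<and> Suc k \<le> e k}" using assms by blast
  then have "Suc k \<in> insert 0 {Suc k | k. k \<le> J \<and> Suc k \<le> e k}" by (rule insertI2)
  then show ?thesis unfolding bb_def by (rule Max_ge[OF bb_fin])
qed

lemma bb_cases: "bb J e = 0 \<or> (\<exists>k. k \<le> J \<and> Suc k \<le> e k \<and> bb J e = Suc k)"
proof -
  have "bb J e \<in> insert 0 {Suc k | k. k \<le> J \<and> Suc k \<le> e k}"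
    unfolding bb_def by (rule Max_in[OF bb_fin]) (rule insert_not_empty)
  then show ?thesis by blast
qed

lemma b_step:
  fixes e f :: "nat \<Rightarrow> nat"
  assumes st: "\<And>j. j < J \<Longrightarrow> f j + 1 \<le> e (Suc j)" and e0: "1 \<le> e 0" and fJ: "\<And>j. f j \<le> J"
  shows "bb J f + 1 \<le> bb J e"
proof -
  have e0': "Suc 0 \<le> e 0" using e0 by simp
  have b1: "Suc 0 \<le> bb J e" by (rule bb_ge[of 0 J e, OF _ e0']) simp
  show ?thesis
  proof (cases "bb J f = 0")
    case True then show ?thesis using b1 by linarith
  next
    case False
    with bb_cases[of J f] obtain k where k: "k \<le> J" "Suc k \<le> f k" "bb J f = Suc k" by blast
    have fk: "f k \<le> J" by (rule fJ)
    have kJ: "k < J" using k(2) fk by linarith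
    have "f k + 1 \<le> e (Suc k)" by (rule st[OF kJ])
    then have ek: "Suc (Suc k) \<le> e (Suc k)" using k(2) by linarith
    have kJ': "Suc k \<le> J" using kJ by linarith
    have "Suc (Suc k) \<le> bb J e" by (rule bb_ge[of "Suc k" J e, OF kJ' ek])
    then show ?thesis using k(3) by linarith
  qed
qed

lemma sum_Un_le':
  fixes f :: "'a \<Rightarrow> real"
  assumes "finite A" "finite B" "\<And>x. 0 \<le> f x"
  shows "sum f (A \<union> B) \<le> sum f A + sum f B"
proof -
  have "0 \<le> sum f (A \<inter> B)" using assms(3) by (simp add: sum_nonneg)
  then show ?thesis using sum_Un[OF assms(1,2), of f] by simp
qed

lemma count_step:
  fixes C :: "'a::euclidean_space set"
  assumes nrm: "is_norm N" and okC: "ok n C"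
    and vw: "v \<in> extreme_points C" "w \<in> extreme_points C" "v \<noteq> w"
    and m: "m = (1/2) *\<^sub>R (v + w)"
    and lg: "\<And>a b. a \<in> extreme_points C \<Longrightarrow> b \<in> extreme_points C \<Longrightarrow> N (a - b) \<le> N (v - w)"
    and t1: "th' \<le> N (v - w)" and t2: "N (v - w) < 2 * th" and t3: "th' \<le> 2 * th - N (v - w)"
  shows "card {p \<in> extreme_points (kid m v C) \<times> extreme_points (kid m v C). th \<le> N (fst p - snd p)} + 1
         \<le> card {p \<in> extreme_points C \<times> extreme_points C. th' \<le> N (fst p - snd p)}"
proof -
  let ?S = "extreme_points C"
  define X where "X = insert m (?S - {v})"
  note kf = kid_facts[OF okC vw m]
  have epX: "extreme_points (kid m v C) = X" unfolding X_def by (rule kf(2))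
  have mS: "m \<notin> ?S" by (rule kf(4))
  have finS: "finite ?S" by (rule ok_basic(1)[OF okC])
  define A where "A = {p \<in> X \<times> X. th \<le> N (fst p - snd p)}"
  define B where "B = {p \<in> ?S \<times> ?S. th' \<le> N (fst p - snd p)}"
  define g where "g = (\<lambda>a. if a = m then v else a)"
  define f where "f = (\<lambda>p. (g (fst p), g (snd p)))"
  let ?l = "N (v - w)"
  have mid: "2 * N (m - y) \<le> N (v - y) + N (w - y)" for y
    using Nmid[OF nrm, of v w y] unfolding m by simp
  have half: "2 * N (m - w) = ?l" using Nhalf[OF nrm, of v w] unfolding m by simp
  have sym: "N (a - b) = N (b - a)" for a b by (rule Nsym[OF nrm])
  have n0: "N 0 = 0" by (rule N0[OF nrm])
  have injg: "inj_on g X"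
    unfolding inj_on_def g_def X_def using mS by auto
  have injf: "inj_on f A"
    unfolding inj_on_def f_def A_def using injg unfolding inj_on_def by auto
  have img: "f ` A \<subseteq> B - {(v, w)}"
  proof
    fix q assume "q \<in> f ` A"
    then obtain a b where ab: "a \<in> X" "b \<in> X" "th \<le> N (a - b)" "q = f (a, b)"
      unfolding A_def by auto
    show "q \<in> B - {(v, w)}"
    proof (cases "a = m")
      case am: True
      show ?thesis
      proof (cases "b = m")
        case True
        then have "N (a - b) = 0" using am n0 by simp
        then show ?thesis using ab(3) t2 Nneg[OF nrm, of "v - w"] by linarith
      next
        case bm: False
        then have bS: "b \<in> ?S" "b \<noteq> v" using ab(2) unfolding X_def by auto
        have bw: "b \<noteq> w"
        proof
          assume "b = w"
          then have "2 * N (a - b) = ?l" using half am by simp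
          then show False using ab(3) t2 by linarith
        qed
        have "2 * N (m - b) \<le> N (v - b) + N (w - b)" by (rule mid)
        moreover have "N (w - b) \<le> ?l" using lg[OF vw(2) bS(1)] .
        moreover have "th \<le> N (m - b)" using ab(3) am by simp
        ultimately have "th' \<le> N (v - b)" using t3 by linarith
        moreover have "q = (v, b)" using ab(4) am bm unfolding f_def g_def by simp
        ultimately show ?thesis unfolding B_def using vw(1) bS bw by auto
      qed
    next
      case an: False
      then have aS: "a \<in> ?S" "a \<noteq> v" using ab(1) unfolding X_def by auto
      show ?thesis
      proof (cases "b = m")
        case bm: True
        have aw: "a \<noteq> w"
        proof
          assume "a = w"
          then have "2 * N (a - b) = ?l" using half bm sym[of w m] by simp
          then show False using ab(3) t2 by linarith
        qed
        have "2 * N (m - a) \<le> N (v - a) + N (w - a)" by (rule mid)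
        moreover have "N (w - a) \<le> ?l" using lg[OF vw(2) aS(1)] .
        moreover have "N (a - b) = N (m - a)" using bm sym by simp
        ultimately have "th' \<le> N (a - v)" using ab(3) t3 sym[of a v] by linarith
        moreover have "q = (a, v)" using ab(4) an bm unfolding f_def g_def by simp
        ultimately show ?thesis unfolding B_def using vw(1) aS by auto
      next
        case bn: False
        then have bS: "b \<in> ?S" using ab(2) unfolding X_def by auto
        have "N (a - b) \<le> ?l" by (rule lg[OF aS(1) bS])
        then have "th' \<le> N (a - b)" using ab(3) t3 by linarith
        moreover have "q = (a, b)" using ab(4) an bn unfolding f_def g_def by simp
        ultimately show ?thesis unfolding B_def using aS bS by auto
      qed
    qed
  qed
  have finB: "finite B" unfolding B_def using finS by auto
  have vwB: "(v, w) \<in> B" unfolding B_def using vw t1 by auto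
  have "card A = card (f ` A)" using card_image[OF injf] by simp
  also have "\<dots> \<le> card (B - {(v, w)})" by (rule card_mono[OF _ img]) (use finB in auto)
  also have "\<dots> = card B - 1" using vwB finB by simp
  finally have cA: "card A \<le> card B - 1" .
  have "B \<noteq> {}" using vwB by blast
  then have "0 < card B" using finB card_gt_0_iff[of B] by blast
  then have "card A + 1 \<le> card B" using cA by linarith
  then show ?thesis unfolding A_def B_def epX .
qed



lemma no_pos_limit:
  fixes CC :: "nat \<Rightarrow> 'a::euclidean_space set set" and V W :: "nat \<Rightarrow> 'a" and N :: "'a \<Rightarrow> real"
  assumes nrm: "is_norm N" and inv: "\<And>r. binv n C0 (CC r)"
    and le: "\<And>r. is_longest_edge N (V r) (W r) (CC r)"
    and st: "\<And>r. CC (Suc r) = bisect (V r) (W r) (CC r)"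
    and neq: "\<And>r. V r \<noteq> W r"
    and dec: "\<And>r. N (V (Suc r) - W (Suc r)) \<le> N (V r - W r)"
    and pos: "0 < Ls" and low: "\<And>r. Ls \<le> N (V r - W r)"
    and lim: "(\<lambda>r. N (V r - W r)) \<longlonglongrightarrow> Ls"
  shows False
proof -
  define l where "l r = N (V r - W r)" for r
  define J where "J = (n+1)*(n+1)"
  have eps: "0 < Ls / 2^(J+1)" using pos by simp
  obtain R where R: "\<And>r. r \<ge> R \<Longrightarrow> norm (l r - Ls) < Ls / 2^(J+1)"
    using LIMSEQ_D[OF lim eps] unfolding l_def by blast
  define U where "U = l R"
  define d where "d = U - Ls"
  have lL: "Ls \<le> l r" for r using low unfolding l_def by simp
  have d0: "0 \<le> d" using lL[of R] unfolding d_def U_def by simp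
  have "d < Ls / 2^(J+1)" using R[of R] unfolding d_def U_def by simp
  then have ds: "d * 2^(J+1) < Ls" by (simp add: pos_less_divide_eq)
  have lU: "l r \<le> U" if "r \<ge> R" for r
    unfolding U_def using lift_Suc_antimono_le[of l R r] dec that unfolding l_def by blast
  define th where "th j = U - 2^j * d" for j :: nat
  have th_low: "U < 2 * th j" if "j \<le> J" for j
  proof -
    have "(2::real)^(Suc j) \<le> 2^(J+1)" by (rule power_increasing) (use that in auto)
    then have "2^(Suc j) * d \<le> 2^(J+1) * d" using d0 by (rule mult_right_mono)
    then have "2^(Suc j) * d < Ls" using ds by (simp add: mult.commute)
    moreover have "Ls \<le> U" using lL[of R] unfolding U_def .
    ultimately show ?thesis unfolding th_def by simp
  qed
  have th0: "th 0 = Ls" unfolding th_def d_def by simp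
  have th_le: "th (Suc j) \<le> Ls" for j
  proof -
    have "(1::real) \<le> 2^(Suc j)" by (rule one_le_power) simp
    then have "d \<le> 2^(Suc j) * d" using d0 by (simp add: mult_le_cancel_right1)
    then show ?thesis unfolding th_def d_def by simp
  qed
  have th_rel: "th (Suc j) \<le> 2 * th j - l r" if "r \<ge> R" for j r
    using lU[OF that] unfolding th_def by simp
  define E where "E j C = card {p \<in> extreme_points C \<times> extreme_points C. th j \<le> N (fst p - snd p)}" for j C
  define h where "h C = bb J (\<lambda>j. E j C)" for C
  define m where "m r = (1/2) *\<^sub>R (V r + W r)" for r
  have key: "h (kid (m r) z C) + 1 \<le> h C"
    if r: "r \<ge> R" and C: "C \<in> CC r" and vw: "V r \<in> extreme_points C" "W r \<in> extreme_points C"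
      and z: "z = V r \<or> z = W r" for r C z
  proof -
    have okC: "ok n C" using inv[of r] C unfolding binv_def by blast
    have lg0: "N (a - b) \<le> l r" if "a \<in> extreme_points C" "b \<in> extreme_points C" for a b
      using le[of r] C that unfolding is_longest_edge_def is_edge_of_def l_def by blast
    obtain z' where z': "z \<in> extreme_points C" "z' \<in> extreme_points C" "z \<noteq> z'"
       "m r = (1/2) *\<^sub>R (z + z')" "N (z - z') = l r"
    proof (cases "z = V r")
      case True
      show ?thesis by (rule that[of "W r"]) (use True vw neq[of r] in \<open>auto simp: m_def l_def\<close>)
    next
      case False
      then have zw: "z = W r" using z by blast
      have "N (W r - V r) = l r" unfolding l_def by (rule Nsym[OF nrm])
      then show ?thesis by (intro that[of "V r"]) (use zw vw neq[of r] in \<open>auto simp: m_def add.commute\<close>)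
    qed
    have lg: "N (a - b) \<le> N (z - z')" if "a \<in> extreme_points C" "b \<in> extreme_points C" for a b
      using lg0[OF that] z'(5) by simp
    note kf = kid_facts[OF okC z'(1,2,3,4)]
    have fJ: "E j (kid (m r) z C) \<le> J" for j
    proof -
      have fin: "finite (extreme_points (kid (m r) z C))" by (rule ok_basic(1)[OF kf(1)])
      have "E j (kid (m r) z C) \<le> card (extreme_points (kid (m r) z C) \<times> extreme_points (kid (m r) z C))"
        unfolding E_def by (rule card_mono) (use fin in auto)
      also have "\<dots> = J" unfolding card_cartesian_product ok_basic(3)[OF kf(1)] J_def by simp
      finally show ?thesis .
    qed
    have e0: "1 \<le> E 0 C"
    proof -
      have fin: "finite (extreme_points C)" by (rule ok_basic(1)[OF okC])
      have "(z, z') \<in> {p \<in> extreme_points C \<times> extreme_points C. th 0 \<le> N (fst p - snd p)}"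
        using z'(1,2,5) th0 lL[of r] by simp
      then have "{p \<in> extreme_points C \<times> extreme_points C. th 0 \<le> N (fst p - snd p)} \<noteq> {}" by blast
      moreover have "finite {p \<in> extreme_points C \<times> extreme_points C. th 0 \<le> N (fst p - snd p)}"
        using fin by simp
      ultimately show ?thesis unfolding E_def using card_gt_0_iff by (metis One_nat_def Suc_leI)
    qed
    have stp: "E j (kid (m r) z C) + 1 \<le> E (Suc j) C" if j: "j < J" for j
    proof -
      have t1: "th (Suc j) \<le> N (z - z')" using th_le[of j] lL[of r] z'(5) by simp
      have t2: "N (z - z') < 2 * th j" using th_low[of j] j lU[OF r] z'(5) by simp
      have t3: "th (Suc j) \<le> 2 * th j - N (z - z')" using th_rel[OF r, of j] z'(5) by simp
      show ?thesis unfolding E_def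
        by (rule count_step[OF nrm okC z'(1,2,3,4) lg t1 t2 t3])
    qed
    show ?thesis unfolding h_def by (rule b_step[OF stp e0 fJ])
  qed
  define g where "g C = (3::real) ^ (h C)" for C
  have g0: "0 \<le> g C" for C unfolding g_def by simp
  have gk: "g (kid (m r) z C) \<le> g C / 3"
    if "r \<ge> R" "C \<in> CC r" "V r \<in> extreme_points C" "W r \<in> extreme_points C" "z = V r \<or> z = W r" for r C z
  proof -
    have "(3::real) ^ (h (kid (m r) z C) + 1) \<le> 3 ^ h C"
      by (rule power_increasing[OF key[OF that]]) simp
    then show ?thesis unfolding g_def by simp
  qed
  define Wt where "Wt r = (\<Sum>C\<in>CC r. g C)" for r
  have Wt0: "0 \<le> Wt r" for r unfolding Wt_def using g0 by (simp add: sum_nonneg)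
  have Wdec: "Wt (Suc r) \<le> Wt r - 1/3" if r: "r \<ge> R" for r
  proof -
    let ?K = "CC r"
    define P where "P = {C\<in>?K. \<not> (V r \<in> extreme_points C \<and> W r \<in> extreme_points C)}"
    define B where "B = {C\<in>?K. V r \<in> extreme_points C \<and> W r \<in> extreme_points C}"
    have eq: "CC (Suc r) = P \<union> kid (m r) (V r) ` B \<union> kid (m r) (W r) ` B"
      unfolding st P_def B_def by (rule bisect_eq[OF inv neq m_def])
    have finK: "finite ?K" using inv[of r] unfolding binv_def by blast
    have finP: "finite P" and finB: "finite B" unfolding P_def B_def using finK by auto
    have s1: "Wt (Suc r) \<le> sum g P + sum g (kid (m r) (V r) ` B) + sum g (kid (m r) (W r) ` B)"
    proof -
      have "Wt (Suc r) \<le> sum g (P \<union> kid (m r) (V r) ` B) + sum g (kid (m r) (W r) ` B)"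
        unfolding Wt_def eq by (rule sum_Un_le') (use finP finB g0 in auto)
      moreover have "sum g (P \<union> kid (m r) (V r) ` B) \<le> sum g P + sum g (kid (m r) (V r) ` B)"
        by (rule sum_Un_le') (use finP finB g0 in auto)
      ultimately show ?thesis by linarith
    qed
    have s2: "sum g (kid (m r) z ` B) \<le> (\<Sum>C\<in>B. g C / 3)" if z: "z = V r \<or> z = W r" for z
    proof -
      have "sum g (kid (m r) z ` B) \<le> sum (g \<circ> kid (m r) z) B"
        by (rule sum_image_le[OF finB]) (use g0 in auto)
      also have "\<dots> \<le> (\<Sum>C\<in>B. g C / 3)"
        by (rule sum_mono) (use gk[OF r _ _ _ z] in \<open>auto simp: B_def\<close>)
      finally show ?thesis .
    qed
    have s3: "Wt r = sum g P + sum g B"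
    proof -
      have "?K = P \<union> B" "P \<inter> B = {}" unfolding P_def B_def by auto
      then show ?thesis unfolding Wt_def using sum.union_disjoint[OF finP finB, of g] by simp
    qed
    obtain C where C: "C \<in> B"
      using le[of r] unfolding is_longest_edge_def is_edge_of_def B_def by blast
    have "g C \<le> sum g B" by (rule member_le_sum[OF C]) (use g0 finB in auto)
    moreover have "1 \<le> g C" unfolding g_def by simp
    moreover have "(\<Sum>C\<in>B. g C / 3) = sum g B / 3" by (simp add: sum_divide_distrib)
    ultimately show ?thesis using s1 s2[of "V r"] s2[of "W r"] s3 by simp
  qed
  have Wdec3: "3 * Wt (Suc r) \<le> 3 * Wt r - 1" if "r \<ge> R" for r
    using Wdec[OF that] by simp
  have Wk: "3 * Wt (R + k) \<le> 3 * Wt R - real k" for k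
  proof (induction k)
    case 0 then show ?case by simp
  next
    case (Suc k)
    have "3 * Wt (Suc (R + k)) \<le> 3 * Wt (R + k) - 1" by (rule Wdec3) simp
    then show ?case using Suc by simp
  qed
  define k where "k = nat \<lceil>3 * Wt R\<rceil> + 1"
  have "3 * Wt R \<le> real (nat \<lceil>3 * Wt R\<rceil>)" by linarith
  then have "3 * Wt R - real k < 0" unfolding k_def by simp
  then show False using Wk[of k] Wt0[of "R + k"] by linarith
qed



theorem proposition3p9:
  fixes N :: "real^'m \<Rightarrow> real"
    and Y :: "(real^'m) set"
    and C0 :: "(real^'m) set"
    and \<CC> :: "nat \<Rightarrow> (real^'m) set set"
  assumes "is_norm N"
    and "bounded Y"
    and "int CARD('m) simplex C0"
    and "Y \<subseteq> C0"
    and "\<CC> 0 = {C0}"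
    and "\<And>r. r \<ge> 1 \<Longrightarrow> \<exists>v w. is_longest_edge N v w (\<CC> (r - 1)) \<and> \<CC> r = bisect v w (\<CC> (r - 1))"
  shows "(\<forall>r. simplicial_cover Y (\<CC> r)) \<and> (\<lambda>r. mesh_size N (\<CC> r)) \<longlonglongrightarrow> 0"
proof -
  note nrm = assms(1)
  have n1: "CARD('m) \<ge> 1"
  proof -
    have "0 < CARD('m)" by (simp add: card_gt_0_iff)
    then show ?thesis by simp
  qed
  have ex: "\<forall>r. \<exists>v w. is_longest_edge N v w (\<CC> r) \<and> \<CC> (Suc r) = bisect v w (\<CC> r)"
  proof
    fix r
    show "\<exists>v w. is_longest_edge N v w (\<CC> r) \<and> \<CC> (Suc r) = bisect v w (\<CC> r)"
      using assms(6)[of "Suc r"] by simp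
  qed
  then obtain V W where VW: "\<And>r. is_longest_edge N (V r) (W r) (\<CC> r)"
      "\<And>r. \<CC> (Suc r) = bisect (V r) (W r) (\<CC> r)"
    by metis
  have inv: "binv CARD('m) C0 (\<CC> r)" for r
  proof (induction r)
    case 0 then show ?case using binv_init[OF assms(3)] assms(5) by simp
  next
    case (Suc r)
    have "V r \<noteq> W r" by (rule longest_neq[OF nrm Suc n1 VW(1)])
    then show ?case unfolding VW(2) by (rule step_inv[OF Suc])
  qed
  have neq: "V r \<noteq> W r" for r by (rule longest_neq[OF nrm inv n1 VW(1)])
  have part1: "\<forall>r. simplicial_cover Y (\<CC> r)" using binv_cover[OF inv assms(4)] by blast
  have mesh: "mesh_size N (\<CC> r) = N (V r - W r)" for r by (rule mesh_longest[OF inv VW(1)])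
  have dec: "N (V (Suc r) - W (Suc r)) \<le> N (V r - W r)" for r
  proof -
    obtain X where X: "X \<in> \<CC> (Suc r)" "V (Suc r) \<in> extreme_points X" "W (Suc r) \<in> extreme_points X"
      using VW(1)[of "Suc r"] unfolding is_longest_edge_def is_edge_of_def by blast
    show ?thesis
      by (rule edge_bound[OF nrm inv VW(1) neq _ X(2,3)]) (use X(1) VW(2) in simp)
  qed
  have nn: "0 \<le> N (V r - W r)" for r by (rule Nneg[OF nrm])
  have "decseq (\<lambda>r. N (V r - W r))" by (rule decseq_SucI) (rule dec)
  then obtain Ls where lim: "(\<lambda>r. N (V r - W r)) \<longlonglongrightarrow> Ls" and low: "\<forall>i. Ls \<le> N (V i - W i)"
    using decseq_convergent[of "\<lambda>r. N (V r - W r)" 0] nn by blast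
  have "0 \<le> Ls" by (rule LIMSEQ_le_const[OF lim]) (use nn in blast)
  moreover have "\<not> 0 < Ls"
  proof
    assume pos: "0 < Ls"
    show False
      by (rule no_pos_limit[OF nrm inv VW(1) VW(2) neq dec pos _ lim]) (use low in blast)
  qed
  ultimately have "Ls = 0" by simp
  then have "(\<lambda>r. mesh_size N (\<CC> r)) \<longlonglongrightarrow> 0" using lim unfolding mesh by simp
  then show ?thesis using part1 by blast
qed

end
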